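(* Suppose that a pair $(\mathfrak m,\mathfrak m^* )$ of functions on the edges of the lattice strip is ICSH and has ICRBV. Then for every $y\in\mathbb Z$, $$\int_{\gamma_y}\big(\mathfrak m(z)\psi(z)\,dz+\mathfrak m^*(z)\psi^*(z)\,d\bar z\big)=\int_{\gamma_0}\big(\mathfrak m(z)\psi(z)\,dz+\mathfrak m^*(z)\psi^*(z)\,d\bar z\big).$$
   Context: Fix integers $a<0<b$, $C=\{a,\dots,b\}$, $C^*=\{a+\frac12,\dots,b-\frac12\}$. $\tilde V$ has orthonormal basis $(e_\rho)_{\rho\in\{\pm1\}^C}$. For $x'\in C^*$, $\varsigma_{x'}(\rho)$ flips the signs of $\rho_x$ for $x<x'$; $\psi_{x'}e_\rho=\frac{-\rho_{x'-1/2}+i\rho_{x'+1/2}}{\sqrt2}e_{\varsigma_{x'}(\rho)}$, $\psi^*_{x'}e_\rho=\frac{-i\rho_{x'-1/2}+\rho_{x'+1/2}}{\sqrt2}e_{\varsigma_{x'}(\rho)}$; $\mathrm{CliffGen}$ is their span. With $\beta=\frac12\log(\sqrt2+1)$: $T_h^{1/2}$ diagonal with entries $\exp(\frac\beta2\sum_{x=a}^{b-1}\rho_x\rho_{x+1})$, $e_\tau^\dagger T_ve_\rho=\exp(\beta\sum_{x=a}^b\rho_x\tau_x)\delta_{\tau_a\rho_a}\delta_{\tau_b\rho_b}$, $T=T_h^{1/2}T_vT_h^{1/2}$. The lattice strip: vertices $C\times\mathbb Z\subset\mathbb C$, nearest-neighbour edges $E$ identified with midpoints, faces with centres $p$; vertical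 edges $a+iy'$ / $b+iy'$ ($y'\in\mathbb Z+\frac12$) are left / right boundary edges. The fermions $\psi,\psi^*:E\to\mathrm{CliffGen}$ are the unique functions with $\psi(x'+iy)=T^{-y}\psi_{x'}T^y$, $\psi^*(x'+iy)=T^{-y}\psi^*_{x'}T^y$ on horizontal edges, such that for edges $z_1,z_2$ adjacent to a common vertex $v$ and face $p$, $\psi(z_1)+\frac{i|v-p|}{v-p}\psi^*(z_1)=\psi(z_2)+\frac{i|v-p|}{v-p}\psi^*(z_2)$, and $\psi(L)+i\psi^*(L)=0$, $\psi(R)-i\psi^*(R)=0$ on left/right boundary edges. For a contour $(w_0,\dots,w_m)$ with $z_j$ the edge joining $w_{j-1},w_j$: $\int(\mathfrak m\psi\,dz+\mathfrak m^*\psi^*\,d\bar z)=\sum_j(\mathfrak m(z_j)\psi(z_j)(w_j-w_{j-1})+\mathfrak m^*(z_j)\psi^*(z_j)\overline{(w_j-w_{j-1})})$. $\gamma_y=(a+iy,a+1+iy,\dots,b+iy)$. ICSH: for edges $z_1,z_2$ adjacent to a common vertex $v$ and face $p$, $\mathfrak m(z_1)-\frac{i|v-p|}{v-p}\mathfrak m^*(z_1)=\mathfrak m(z_2)-\frac{i|v-p|}{v-p}\mathfrak m^*(z_2)$. ICRBV: $\mathfrak m(L)-i\mathfrak m^*(L)=0$ and $\mathfrak m(R)+i\mathfrak m^*(R)=0$ on all left/right boundary edges $L,R$. *)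

theory Defs
  imports Complex_Main
begin

text \<open>A spin configuration rho in {+-1}^C, C = {a..b}, is represented by a function
  int => int with values +-1 on {a..b} and (normalised) value 1 outside.\<close>
definition cfgs :: "int \<Rightarrow> int \<Rightarrow> (int \<Rightarrow> int) set" where
  "cfgs a b = {\<rho>. (\<forall>x. a \<le> x \<and> x \<le> b \<longrightarrow> \<rho> x = 1 \<or> \<rho> x = -1)
                  \<and> (\<forall>x. \<not> (a \<le> x \<and> x \<le> b) \<longrightarrow> \<rho> x = 1)}"

text \<open>A linear operator M on V~ is given by its matrix: M tau rho = e_tau^dagger M e_rho
  (entries for non-configurations are meant to be 0).\<close>
type_synonym cop = "(int \<Rightarrow> int) \<Rightarrow> (int \<Rightarrow> int) \<Rightarrow> complex"

definition mmul :: "int \<Rightarrow> int \<Rightarrow> cop \<Rightarrow> cop \<Rightarrow> cop" where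
  "mmul a b M N = (\<lambda>\<tau> \<rho>. \<Sum>\<sigma>\<in>cfgs a b. M \<tau> \<sigma> * N \<sigma> \<rho>)"

definition mid :: "int \<Rightarrow> int \<Rightarrow> cop" where
  "mid a b = (\<lambda>\<tau> \<rho>. if \<rho> \<in> cfgs a b \<and> \<tau> = \<rho> then 1 else 0)"

primrec mpow :: "int \<Rightarrow> int \<Rightarrow> cop \<Rightarrow> nat \<Rightarrow> cop" where
  "mpow a b M 0 = mid a b"
| "mpow a b M (Suc n) = mmul a b M (mpow a b M n)"

definition minv :: "int \<Rightarrow> int \<Rightarrow> cop \<Rightarrow> cop" where
  "minv a b M = (THE N. (\<forall>\<tau> \<rho>. \<tau> \<notin> cfgs a b \<or> \<rho> \<notin> cfgs a b \<longrightarrow> N \<tau> \<rho> = 0)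
                     \<and> mmul a b M N = mid a b \<and> mmul a b N M = mid a b)"

definition mzpow :: "int \<Rightarrow> int \<Rightarrow> cop \<Rightarrow> int \<Rightarrow> cop" where
  "mzpow a b M y = (if 0 \<le> y then mpow a b M (nat y) else mpow a b (minv a b M) (nat (- y)))"

text \<open>varsigma_{x'} for x' = k + 1/2: flips rho_x for all x in C with x < x'.\<close>
definition flip :: "int \<Rightarrow> int \<Rightarrow> (int \<Rightarrow> int) \<Rightarrow> (int \<Rightarrow> int)" where
  "flip a k \<rho> = (\<lambda>x. if a \<le> x \<and> x \<le> k then - \<rho> x else \<rho> x)"

text \<open>psi_{x'} and psi*_{x'} for x' = k + 1/2.\<close>
definition psi_op :: "int \<Rightarrow> int \<Rightarrow> int \<Rightarrow> cop" where
  "psi_op a b k = (\<lambda>\<tau> \<rho>. if \<rho> \<in> cfgs a b \<and> \<tau> = flip a k \<rho>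
      then (- of_int (\<rho> k) + \<i> * of_int (\<rho> (k + 1))) / complex_of_real (sqrt 2) else 0)"

definition psis_op :: "int \<Rightarrow> int \<Rightarrow> int \<Rightarrow> cop" where
  "psis_op a b k = (\<lambda>\<tau> \<rho>. if \<rho> \<in> cfgs a b \<and> \<tau> = flip a k \<rho>
      then (- \<i> * of_int (\<rho> k) + of_int (\<rho> (k + 1))) / complex_of_real (sqrt 2) else 0)"

definition beta :: real where
  "beta = ln (sqrt 2 + 1) / 2"

definition Th_half :: "int \<Rightarrow> int \<Rightarrow> cop" where
  "Th_half a b = (\<lambda>\<tau> \<rho>. if \<rho> \<in> cfgs a b \<and> \<tau> = \<rho>
      then complex_of_real (exp (beta / 2 * (\<Sum>x\<in>{a..<b}. of_int (\<rho> x * \<rho> (x + 1))))) else 0)"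

definition Tv :: "int \<Rightarrow> int \<Rightarrow> cop" where
  "Tv a b = (\<lambda>\<tau> \<rho>. if \<rho> \<in> cfgs a b \<and> \<tau> \<in> cfgs a b \<and> \<tau> a = \<rho> a \<and> \<tau> b = \<rho> b
      then complex_of_real (exp (beta * (\<Sum>x\<in>{a..b}. of_int (\<rho> x * \<tau> x)))) else 0)"

definition Ttr :: "int \<Rightarrow> int \<Rightarrow> cop" where
  "Ttr a b = mmul a b (mmul a b (Th_half a b) (Tv a b)) (Th_half a b)"

section \<open>The lattice strip (points are complex numbers; edges = midpoints, faces = centres)\<close>

definition vertices :: "int \<Rightarrow> int \<Rightarrow> complex set" where
  "vertices a b = {Complex (of_int x) (of_int y) | x y. a \<le> x \<and> x \<le> b}"

definition hedges :: "int \<Rightarrow> int \<Rightarrow> complex set" where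
  "hedges a b = {Complex (of_int x + 1/2) (of_int y) | x y. a \<le> x \<and> x < b}"

definition vedges :: "int \<Rightarrow> int \<Rightarrow> complex set" where
  "vedges a b = {Complex (of_int x) (of_int y + 1/2) | x y. a \<le> x \<and> x \<le> b}"

definition edges :: "int \<Rightarrow> int \<Rightarrow> complex set" where
  "edges a b = hedges a b \<union> vedges a b"

definition faces :: "int \<Rightarrow> int \<Rightarrow> complex set" where
  "faces a b = {Complex (of_int x + 1/2) (of_int y + 1/2) | x y. a \<le> x \<and> x < b}"

definition adj :: "complex \<Rightarrow> complex \<Rightarrow> bool" where
  "adj z w \<longleftrightarrow> cmod (z - w) = 1/2"

definition corner :: "int \<Rightarrow> int \<Rightarrow> complex \<Rightarrow> complex \<Rightarrow> complex \<Rightarrow> complex \<Rightarrow> bool" where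
  "corner a b z1 z2 v p \<longleftrightarrow> z1 \<in> edges a b \<and> z2 \<in> edges a b \<and> v \<in> vertices a b \<and> p \<in> faces a b
     \<and> adj z1 v \<and> adj z2 v \<and> adj z1 p \<and> adj z2 p"

definition cfac :: "complex \<Rightarrow> complex \<Rightarrow> complex" where
  "cfac v p = \<i> * complex_of_real (cmod (v - p)) / (v - p)"

definition is_fermion :: "int \<Rightarrow> int \<Rightarrow> (complex \<Rightarrow> cop) \<Rightarrow> (complex \<Rightarrow> cop) \<Rightarrow> bool" where
  "is_fermion a b \<psi> \<psi>s \<longleftrightarrow>
     (\<forall>k y. a \<le> k \<and> k < b \<longrightarrow>
        \<psi> (Complex (of_int k + 1/2) (of_int y))
          = mmul a b (mmul a b (mzpow a b (Ttr a b) (- y)) (psi_op a b k)) (mzpow a b (Ttr a b) y)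
      \<and> \<psi>s (Complex (of_int k + 1/2) (of_int y))
          = mmul a b (mmul a b (mzpow a b (Ttr a b) (- y)) (psis_op a b k)) (mzpow a b (Ttr a b) y))
   \<and> (\<forall>z1 z2 v p. corner a b z1 z2 v p \<longrightarrow>
        (\<lambda>\<tau> \<rho>. \<psi> z1 \<tau> \<rho> + cfac v p * \<psi>s z1 \<tau> \<rho>) = (\<lambda>\<tau> \<rho>. \<psi> z2 \<tau> \<rho> + cfac v p * \<psi>s z2 \<tau> \<rho>))
   \<and> (\<forall>y::int. (\<lambda>\<tau> \<rho>. \<psi> (Complex (of_int a) (of_int y + 1/2)) \<tau> \<rho>
                     + \<i> * \<psi>s (Complex (of_int a) (of_int y + 1/2)) \<tau> \<rho>) = (\<lambda>\<tau> \<rho>. 0)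
             \<and> (\<lambda>\<tau> \<rho>. \<psi> (Complex (of_int b) (of_int y + 1/2)) \<tau> \<rho>
                     - \<i> * \<psi>s (Complex (of_int b) (of_int y + 1/2)) \<tau> \<rho>) = (\<lambda>\<tau> \<rho>. 0))"

definition ICSH :: "int \<Rightarrow> int \<Rightarrow> (complex \<Rightarrow> complex) \<Rightarrow> (complex \<Rightarrow> complex) \<Rightarrow> bool" where
  "ICSH a b m ms \<longleftrightarrow> (\<forall>z1 z2 v p. corner a b z1 z2 v p \<longrightarrow>
      m z1 - cfac v p * ms z1 = m z2 - cfac v p * ms z2)"

definition ICRBV :: "int \<Rightarrow> int \<Rightarrow> (complex \<Rightarrow> complex) \<Rightarrow> (complex \<Rightarrow> complex) \<Rightarrow> bool" where
  "ICRBV a b m ms \<longleftrightarrow> (\<forall>y::int.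
      m (Complex (of_int a) (of_int y + 1/2)) - \<i> * ms (Complex (of_int a) (of_int y + 1/2)) = 0
    \<and> m (Complex (of_int b) (of_int y + 1/2)) + \<i> * ms (Complex (of_int b) (of_int y + 1/2)) = 0)"

text \<open>Integral of m psi dz + m* psi* d(conj z) along the contour (w_0,...,w_m);
  z_j = (w_{j-1} + w_j)/2 is the edge joining w_{j-1} and w_j.\<close>
definition cint :: "(complex \<Rightarrow> complex) \<Rightarrow> (complex \<Rightarrow> complex) \<Rightarrow> (complex \<Rightarrow> cop) \<Rightarrow> (complex \<Rightarrow> cop)
                     \<Rightarrow> complex list \<Rightarrow> cop" where
  "cint m ms \<psi> \<psi>s ws = (\<lambda>\<tau> \<rho>. \<Sum>j\<in>{1..<length ws}.
      m ((ws ! (j - 1) + ws ! j) / 2) * \<psi> ((ws ! (j - 1) + ws ! j) / 2) \<tau> \<rho> * (ws ! j - ws ! (j - 1))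
    + ms ((ws ! (j - 1) + ws ! j) / 2) * \<psi>s ((ws ! (j - 1) + ws ! j) / 2) \<tau> \<rho> * cnj (ws ! j - ws ! (j - 1)))"

definition gamma :: "int \<Rightarrow> int \<Rightarrow> int \<Rightarrow> complex list" where
  "gamma a b y = map (\<lambda>x. Complex (of_int x) (of_int y)) [a..b]"

end

theory Submission
  imports Defs
begin
lemma s12: "sqrt (1/2) = sqrt 2 / 2"
  by (rule real_sqrt_unique) (auto simp: power_divide)
lemma s14: "sqrt (1/4) = 1/2"
  by (rule real_sqrt_unique) (auto simp: power_divide)
lemma cfac_lem:
  assumes "v - p = Complex (s/2) (t/2)" "s = 1 \<or> s = -1" "t = 1 \<or> t = -1"
    "w * Complex (s/2) (t/2) = \<i> * complex_of_real (sqrt 2 / 2)"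
  shows "cfac v p = w"
proof -
  have c: "cmod (Complex (s/2) (t/2)) = sqrt 2 / 2"
    using assms(2,3) by (auto simp: cmod_def power2_eq_square s12)
  have nz: "Complex (s/2) (t/2) \<noteq> 0" using assms(2,3) by (auto simp: complex_eq_iff)
  show ?thesis unfolding cfac_def assms(1) c using nz assms(4)
    by (simp add: nonzero_divide_eq_eq mult_ac)
qed
definition uu :: complex where "uu = complex_of_real (sqrt 2 / 2)"
lemma c00: "cfac (Complex (of_int k) (of_int y)) (Complex (of_int k + 1/2) (of_int y + 1/2)) = -(1+\<i>)*uu"
  by (rule cfac_lem[where s="-1" and t="-1"]) (auto simp: complex_eq_iff uu_def)
lemma c10: "cfac (Complex (of_int (k+1)) (of_int y)) (Complex (of_int k + 1/2) (of_int y + 1/2)) = (-1+\<i>)*uu"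
  by (rule cfac_lem[where s="1" and t="-1"]) (auto simp: complex_eq_iff uu_def)
lemma c11: "cfac (Complex (of_int (k+1)) (of_int (y+1))) (Complex (of_int k + 1/2) (of_int y + 1/2)) = (1+\<i>)*uu"
  by (rule cfac_lem[where s="1" and t="1"]) (auto simp: complex_eq_iff uu_def)
lemma c01: "cfac (Complex (of_int k) (of_int (y+1))) (Complex (of_int k + 1/2) (of_int y + 1/2)) = (1-\<i>)*uu"
  by (rule cfac_lem[where s="-1" and t="1"]) (auto simp: complex_eq_iff uu_def)
lemma adj1: "adj (Complex (of_int k + 1/2) (of_int y)) (Complex (of_int (k+1)) (of_int y))"
  by (simp add: adj_def cmod_def power2_eq_square s14)
lemma adj2: "adj (Complex (of_int k + 1/2) (of_int y)) (Complex (of_int k + 1/2) (of_int y + 1/2))"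
  by (simp add: adj_def cmod_def power2_eq_square s14)
lemma face_alg:
  fixes u j pB qB pR qR pT qT pL qL mB nB mR nR mT nT mL nL :: complex
  assumes r: "2*u*u = 1" and j: "j*j = -1"
  and a1: "pB + (-(1+j)*u)*qB = pL + (-(1+j)*u)*qL"
  and a2: "pB + ((-1+j)*u)*qB = pR + ((-1+j)*u)*qR"
  and a3: "pT + ((1+j)*u)*qT = pR + ((1+j)*u)*qR"
  and a4: "pT + ((1-j)*u)*qT = pL + ((1-j)*u)*qL"
  and b1: "mB - (-(1+j)*u)*nB = mL - (-(1+j)*u)*nL"
  and b2: "mB - ((-1+j)*u)*nB = mR - ((-1+j)*u)*nR"
  and b3: "mT - ((1+j)*u)*nT = mR - ((1+j)*u)*nR"
  and b4: "mT - ((1-j)*u)*nT = mL - ((1-j)*u)*nL"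
  shows "(mB*pB + nB*qB) + j*(mR*pR - nR*qR) - (mT*pT + nT*qT) - j*(mL*pL - nL*qL) = 0"
  using assms by algebra

lemma memH: "a \<le> x \<Longrightarrow> x < b \<Longrightarrow> Complex (of_int x + 1/2) (of_int y) \<in> edges a b"
  unfolding edges_def hedges_def by blast
lemma memV: "a \<le> x \<Longrightarrow> x \<le> b \<Longrightarrow> Complex (of_int x) (of_int y + 1/2) \<in> edges a b"
  unfolding edges_def vedges_def by blast
lemma memVt: "a \<le> x \<Longrightarrow> x \<le> b \<Longrightarrow> Complex (of_int x) (of_int y) \<in> vertices a b"
  unfolding vertices_def by blast
lemma memF: "a \<le> x \<Longrightarrow> x < b \<Longrightarrow> Complex (of_int x + 1/2) (of_int y + 1/2) \<in> faces a b"
  unfolding faces_def by blast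

lemmas adjsimps = adj_def cmod_def power2_eq_square s14

lemma corners:
  assumes "a \<le> k" "k < b"
  shows
  "corner a b (Complex (of_int k + 1/2) (of_int y)) (Complex (of_int k) (of_int y + 1/2))
      (Complex (of_int k) (of_int y)) (Complex (of_int k + 1/2) (of_int y + 1/2))"
  "corner a b (Complex (of_int k + 1/2) (of_int y)) (Complex (of_int (k+1)) (of_int y + 1/2))
      (Complex (of_int (k+1)) (of_int y)) (Complex (of_int k + 1/2) (of_int y + 1/2))"
  "corner a b (Complex (of_int k + 1/2) (of_int (y+1))) (Complex (of_int (k+1)) (of_int y + 1/2))
      (Complex (of_int (k+1)) (of_int (y+1))) (Complex (of_int k + 1/2) (of_int y + 1/2))"
  "corner a b (Complex (of_int k + 1/2) (of_int (y+1))) (Complex (of_int k) (of_int y + 1/2))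
      (Complex (of_int k) (of_int (y+1))) (Complex (of_int k + 1/2) (of_int y + 1/2))"
  unfolding corner_def
  by (insert assms; (intro conjI memH memV memVt memF; simp add: adjsimps))+

lemma ferm_corner:
  assumes "is_fermion a b \<psi> \<psi>s" "corner a b z1 z2 v p"
  shows "\<psi> z1 \<tau> \<rho> + cfac v p * \<psi>s z1 \<tau> \<rho> = \<psi> z2 \<tau> \<rho> + cfac v p * \<psi>s z2 \<tau> \<rho>"
proof -
  from assms have "(\<lambda>\<tau> \<rho>. \<psi> z1 \<tau> \<rho> + cfac v p * \<psi>s z1 \<tau> \<rho>) = (\<lambda>\<tau> \<rho>. \<psi> z2 \<tau> \<rho> + cfac v p * \<psi>s z2 \<tau> \<rho>)"
    unfolding is_fermion_def by blast
  from fun_cong[OF fun_cong[OF this, of \<tau>], of \<rho>] show ?thesis by (simp only:)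
qed

lemma icsh_corner:
  assumes "ICSH a b m ms" "corner a b z1 z2 v p"
  shows "m z1 - cfac v p * ms z1 = m z2 - cfac v p * ms z2"
  using assms unfolding ICSH_def by blast

definition HH :: "(complex \<Rightarrow> complex) \<Rightarrow> (complex \<Rightarrow> complex) \<Rightarrow> (complex \<Rightarrow> cop) \<Rightarrow> (complex \<Rightarrow> cop)
   \<Rightarrow> (int \<Rightarrow> int) \<Rightarrow> (int \<Rightarrow> int) \<Rightarrow> int \<Rightarrow> int \<Rightarrow> complex" where
  "HH m ms \<psi> \<psi>s \<tau> \<rho> y k = (let z = Complex (of_int k + 1/2) (of_int y) in
      m z * \<psi> z \<tau> \<rho> + ms z * \<psi>s z \<tau> \<rho>)"
definition VV :: "(complex \<Rightarrow> complex) \<Rightarrow> (complex \<Rightarrow> complex) \<Rightarrow> (complex \<Rightarrow> cop) \<Rightarrow> (complex \<Rightarrow> cop)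
   \<Rightarrow> (int \<Rightarrow> int) \<Rightarrow> (int \<Rightarrow> int) \<Rightarrow> int \<Rightarrow> int \<Rightarrow> complex" where
  "VV m ms \<psi> \<psi>s \<tau> \<rho> y k = (let z = Complex (of_int k) (of_int y + 1/2) in
      \<i> * (m z * \<psi> z \<tau> \<rho> - ms z * \<psi>s z \<tau> \<rho>))"

lemma uu2: "2 * uu * uu = 1"
proof -
  have "2 * (sqrt 2 / 2) * (sqrt 2 / 2) = (1::real)" by (simp add: field_simps)
  then have "complex_of_real (2 * (sqrt 2 / 2) * (sqrt 2 / 2)) = 1" by simp
  then show ?thesis unfolding uu_def by (simp only: of_real_mult of_real_divide of_real_numeral)
qed

lemma face:
  assumes F: "is_fermion a b \<psi> \<psi>s" and S: "ICSH a b m ms" and k: "a \<le> k" "k < b"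
  shows "HH m ms \<psi> \<psi>s \<tau> \<rho> y k + VV m ms \<psi> \<psi>s \<tau> \<rho> y (k+1)
       - HH m ms \<psi> \<psi>s \<tau> \<rho> (y+1) k - VV m ms \<psi> \<psi>s \<tau> \<rho> y k = 0"
  unfolding HH_def VV_def Let_def
  apply (rule face_alg[OF uu2, where j=\<i>])
  apply simp
  using ferm_corner[OF F corners(1)[OF k]] ferm_corner[OF F corners(2)[OF k]]
     ferm_corner[OF F corners(3)[OF k]] ferm_corner[OF F corners(4)[OF k]]
     icsh_corner[OF S corners(1)[OF k]] icsh_corner[OF S corners(2)[OF k]]
     icsh_corner[OF S corners(3)[OF k]] icsh_corner[OF S corners(4)[OF k]]
  unfolding c00 c10 c11 c01
  by simp_all

lemma cint_gamma:
  assumes "a \<le> b"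
  shows "cint m ms \<psi> \<psi>s (gamma a b y) \<tau> \<rho> = (\<Sum>k\<in>{a..<b}. HH m ms \<psi> \<psi>s \<tau> \<rho> y k)"
proof -
  define ws where "ws = gamma a b y"
  have len: "length ws = nat (b - a + 1)" unfolding ws_def gamma_def by simp
  have nth: "ws ! j = Complex (of_int (a + int j)) (of_int y)" if "j < nat (b - a + 1)" for j
    using that unfolding ws_def gamma_def by simp
  have mid: "(ws ! (j - 1) + ws ! j) / 2 = Complex (of_int (a + int j - 1) + 1/2) (of_int y)"
    and dif: "ws ! j - ws ! (j - 1) = 1"
    if "j \<in> {1..<nat (b - a + 1)}" for j
  proof -
    have j1: "j - 1 < nat (b - a + 1)" "j < nat (b - a + 1)" "1 \<le> j" using that by auto
    have e: "int (j - 1) = int j - 1" using j1 by simp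
    show "(ws ! (j - 1) + ws ! j) / 2 = Complex (of_int (a + int j - 1) + 1/2) (of_int y)"
      unfolding nth[OF j1(1)] nth[OF j1(2)] e by (simp add: complex_eq_iff)
    show "ws ! j - ws ! (j - 1) = 1"
      unfolding nth[OF j1(1)] nth[OF j1(2)] e by (simp add: complex_eq_iff)
  qed
  have "cint m ms \<psi> \<psi>s ws \<tau> \<rho> = (\<Sum>j\<in>{1..<nat (b - a + 1)}. HH m ms \<psi> \<psi>s \<tau> \<rho> y (a + int j - 1))"
    unfolding cint_def len
  proof (rule sum.cong)
    fix j assume j: "j \<in> {1..<nat (b - a + 1)}"
    show "m ((ws ! (j - 1) + ws ! j) / 2) * \<psi> ((ws ! (j - 1) + ws ! j) / 2) \<tau> \<rho> * (ws ! j - ws ! (j - 1))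
    + ms ((ws ! (j - 1) + ws ! j) / 2) * \<psi>s ((ws ! (j - 1) + ws ! j) / 2) \<tau> \<rho> * cnj (ws ! j - ws ! (j - 1))
      = HH m ms \<psi> \<psi>s \<tau> \<rho> y (a + int j - 1)"
      unfolding mid[OF j] dif[OF j] HH_def Let_def by simp
  qed simp
  also have "\<dots> = (\<Sum>k\<in>{a..<b}. HH m ms \<psi> \<psi>s \<tau> \<rho> y k)"
    by (rule sum.reindex_bij_witness[where i="\<lambda>k. nat (k - a + 1)" and j="\<lambda>j. a + int j - 1"])
       (use assms in auto)
  finally show ?thesis unfolding ws_def .
qed

lemma tele:
  fixes f :: "int \<Rightarrow> complex"
  shows "(\<Sum>k\<in>{a..<a + int n}. f k - f (k + 1)) = f a - f (a + int n)"
proof (induction n)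
  case 0
  then show ?case by simp
next
  case (Suc n)
  have s: "{a..<a + int (Suc n)} = insert (a + int n) {a..<a + int n}" by auto
  show ?case unfolding s using Suc by (simp add: algebra_simps)
qed

lemma VV_bd:
  assumes F: "is_fermion a b \<psi> \<psi>s" and R: "ICRBV a b m ms"
  shows "VV m ms \<psi> \<psi>s \<tau> \<rho> y a = 0" "VV m ms \<psi> \<psi>s \<tau> \<rho> y b = 0"
proof -
  let ?L = "Complex (of_int a) (of_int y + 1/2)"
  let ?R = "Complex (of_int b) (of_int y + 1/2)"
  from F have "(\<lambda>\<tau> \<rho>. \<psi> ?L \<tau> \<rho> + \<i> * \<psi>s ?L \<tau> \<rho>) = (\<lambda>\<tau> \<rho>. 0)"
     "(\<lambda>\<tau> \<rho>. \<psi> ?R \<tau> \<rho> - \<i> * \<psi>s ?R \<tau> \<rho>) = (\<lambda>\<tau> \<rho>. 0)"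
    unfolding is_fermion_def by blast+
  from fun_cong[OF fun_cong[OF this(1), of \<tau>], of \<rho>] fun_cong[OF fun_cong[OF this(2), of \<tau>], of \<rho>]
  have p: "\<psi> ?L \<tau> \<rho> = - \<i> * \<psi>s ?L \<tau> \<rho>" "\<psi> ?R \<tau> \<rho> = \<i> * \<psi>s ?R \<tau> \<rho>"
    by (simp_all add: eq_neg_iff_add_eq_0)
  from R have q: "m ?L = \<i> * ms ?L" "m ?R = - \<i> * ms ?R"
    unfolding ICRBV_def by (simp_all add: eq_neg_iff_add_eq_0)
  show "VV m ms \<psi> \<psi>s \<tau> \<rho> y a = 0" "VV m ms \<psi> \<psi>s \<tau> \<rho> y b = 0"
    unfolding VV_def Let_def p q by (simp_all add: algebra_simps)
qed

lemma step:
  assumes ab: "a < b" and F: "is_fermion a b \<psi> \<psi>s" and S: "ICSH a b m ms" and R: "ICRBV a b m ms"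
  shows "cint m ms \<psi> \<psi>s (gamma a b (y + 1)) = cint m ms \<psi> \<psi>s (gamma a b y)"
proof (intro ext)
  fix \<tau> \<rho>
  let ?H = "HH m ms \<psi> \<psi>s \<tau> \<rho>" and ?V = "VV m ms \<psi> \<psi>s \<tau> \<rho> y"
  have "(\<Sum>k\<in>{a..<b}. ?H y k) - (\<Sum>k\<in>{a..<b}. ?H (y+1) k) = (\<Sum>k\<in>{a..<b}. ?V k - ?V (k + 1))"
    unfolding sum_subtractf[symmetric]
  proof (rule sum.cong)
    fix k assume "k \<in> {a..<b}"
    then have "?H y k + ?V (k+1) - ?H (y+1) k - ?V k = 0" using face[OF F S] by auto
    then show "?H y k - ?H (y + 1) k = ?V k - ?V (k + 1)" by (simp add: algebra_simps)
  qed simp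
  also have "\<dots> = ?V a - ?V b"
  proof -
    have eq: "a + int (nat (b - a)) = b" using ab by simp
    show ?thesis using tele[of ?V a "nat (b - a)"] unfolding eq .
  qed
  also have "\<dots> = 0" using VV_bd[OF F R] by simp
  finally show "cint m ms \<psi> \<psi>s (gamma a b (y + 1)) \<tau> \<rho> = cint m ms \<psi> \<psi>s (gamma a b y) \<tau> \<rho>"
    using cint_gamma ab by simp
qed

theorem proposition3p13:
  fixes a b y :: int and m ms :: "complex \<Rightarrow> complex" and \<psi> \<psi>s :: "complex \<Rightarrow> cop"
  assumes "a < 0" and "0 < b"
    and "is_fermion a b \<psi> \<psi>s"
    and "ICSH a b m ms" and "ICRBV a b m ms"
  shows "cint m ms \<psi> \<psi>s (gamma a b y) = cint m ms \<psi> \<psi>s (gamma a b 0)"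
proof -
  have ab: "a < b" using assms by simp
  note st = step[OF ab assms(3,4,5)]
  show ?thesis
  proof (induction y rule: int_induct[where k=0])
    case base then show ?case by simp
  next
    case (step1 i) then show ?case using st[of i] by simp
  next
    case (step2 i) then show ?case using st[of "i - 1"] by simp
  qed
qed

end
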